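(* In the setting described in the context, assume $x_h^2\beta>3$ and $n>\frac1{2\alpha x_h^2\beta}-\frac1{x_h^2\beta}$. Then there exists $\dot k>0$ such that for all $0<k\le\dot k$: $$(\hat\sigma^1_{(k+1)n})^2\le2(\hat\lambda\lambda^{n-1})^2\frac1\alpha(\hat\lambda\lambda^{n-1})^{2k},\qquad (\hat\sigma^{r}_{(k+1)n})^2\le6(\hat\lambda\lambda^{n-r})^2\frac1\alpha(\hat\lambda\lambda^{n-1})^{2k}\ \text{ for every } r\in\{2,\dots,n\}.$$
   Context: Fix $\alpha,\beta,x_h,c>0$ and an integer $n\ge2$. Model: $y=\theta x+\xi$, $\xi\sim\mathcal N(0,\beta^{-1})$, prior $\theta\sim\mathcal N(0,\alpha^{-1})$. Database $D_2$ consists of $n-1$ copies of $(x_h,cx_h)$ and one copy of $(x_h/2,cx_h/2)$. Cyclic SGLD with batch size 1 and step size $\eta=\frac2{(\alpha+nx_h^2\beta)^2}$: $\theta_0\sim\mathcal N(0,\alpha^{-1})$, $\theta_{j+1}=\theta_j+\frac\eta2[-\alpha\theta_j+n\beta(y_{i_j}-\theta_jx_{i_j})x_{i_j}]+\sqrt\eta\,\xi_j$ with $\xi_j\sim\mathcal N(0,1)$ i.i.d. independent of $\theta_0$; the database is shuffled once uniformly and its samples are then used cyclically. Let $r\in\{1,\dots,n\}$ be the position within each epoch at which $(x_h/2,cx_h/2)$ is used; conditionally on $r$ the $j$-th iterate is $\hat\theta^r_j\sim\mathcal N(\hat\mu^r_j,(\hat\sigma^r_j)^2)$. Set $\lambda=1-\frac\eta2(\alpha+nx_h^2\beta)$,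 $\hat\lambda=1-\frac\eta2(\alpha+n\frac{x_h^2}4\beta)$. *)

theory Defs
  imports "HOL-Probability.Probability"
begin

definition sgld_eta :: "real \<Rightarrow> real \<Rightarrow> real \<Rightarrow> nat \<Rightarrow> real" where
  "sgld_eta \<alpha> \<beta> xh n = 2 / (\<alpha> + real n * xh\<^sup>2 * \<beta>)\<^sup>2"

definition sgld_lambda :: "real \<Rightarrow> real \<Rightarrow> real \<Rightarrow> nat \<Rightarrow> real" where
  "sgld_lambda \<alpha> \<beta> xh n = 1 - sgld_eta \<alpha> \<beta> xh n / 2 * (\<alpha> + real n * xh\<^sup>2 * \<beta>)"

definition sgld_lambda_hat :: "real \<Rightarrow> real \<Rightarrow> real \<Rightarrow> nat \<Rightarrow> real" where
  "sgld_lambda_hat \<alpha> \<beta> xh n = 1 - sgld_eta \<alpha> \<beta> xh n / 2 * (\<alpha> + real n * (xh\<^sup>2 / 4) * \<beta>)"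

text \<open>Data point used at iteration j (0-based) when the special sample
  (xh/2, c xh/2) sits at position r (1-based) in each epoch; all other
  positions carry the sample (xh, c xh).\<close>

definition sgld_x :: "real \<Rightarrow> nat \<Rightarrow> nat \<Rightarrow> nat \<Rightarrow> real" where
  "sgld_x xh n r j = (if j mod n = r - 1 then xh / 2 else xh)"

definition sgld_y :: "real \<Rightarrow> real \<Rightarrow> nat \<Rightarrow> nat \<Rightarrow> nat \<Rightarrow> real" where
  "sgld_y xh c n r j = c * sgld_x xh n r j"

fun sgld_iter :: "real \<Rightarrow> real \<Rightarrow> real \<Rightarrow> real \<Rightarrow> nat \<Rightarrow> nat \<Rightarrow>
    ('a \<Rightarrow> real) \<Rightarrow> (nat \<Rightarrow> 'a \<Rightarrow> real) \<Rightarrow> nat \<Rightarrow> 'a \<Rightarrow> real" where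
  "sgld_iter \<alpha> \<beta> xh c n r th0 xi 0 = th0"
| "sgld_iter \<alpha> \<beta> xh c n r th0 xi (Suc j) = (\<lambda>\<omega>.
     sgld_iter \<alpha> \<beta> xh c n r th0 xi j \<omega>
     + sgld_eta \<alpha> \<beta> xh n / 2 *
        (- \<alpha> * sgld_iter \<alpha> \<beta> xh c n r th0 xi j \<omega>
         + real n * \<beta> * (sgld_y xh c n r j - sgld_iter \<alpha> \<beta> xh c n r th0 xi j \<omega> * sgld_x xh n r j)
             * sgld_x xh n r j)
     + sqrt (sgld_eta \<alpha> \<beta> xh n) * xi j \<omega>)"

end

theory Submission
  imports Defs
begin


lemma var_lin:
  fixes M :: "'a measure" and th0 :: "'a \<Rightarrow> real" and xi :: "nat \<Rightarrow> 'a \<Rightarrow> real" and \<alpha> :: real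
  assumes P: "prob_space M" and al: "\<alpha> > 0"
    and D0: "distributed M lborel th0 (normal_density 0 (sqrt (1 / \<alpha>)))"
    and Dx: "\<And>j. distributed M lborel (xi j) (normal_density 0 1)"
    and I: "prob_space.indep_vars M (\<lambda>_. borel) (\<lambda>i. case i of None \<Rightarrow> th0 | Some j \<Rightarrow> xi j) UNIV"
  shows "integral\<^sup>L M (\<lambda>\<omega>. ((a * th0 \<omega> + b + (\<Sum>i<j. c i * xi i \<omega>))
           - integral\<^sup>L M (\<lambda>\<omega>. a * th0 \<omega> + b + (\<Sum>i<j. c i * xi i \<omega>)))\<^sup>2)
         = a\<^sup>2 / \<alpha> + (\<Sum>i<j. (c i)\<^sup>2)"
proof -
  interpret prob_space M by (rule P)
  define X where "X = (\<lambda>i. case i of None \<Rightarrow> th0 | Some j \<Rightarrow> xi j)"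
  define sdv where "sdv = (\<lambda>i::nat option. case i of None \<Rightarrow> sqrt (1 / \<alpha>) | Some j \<Rightarrow> (1::real))"
  define w where "w = (\<lambda>i. case i of None \<Rightarrow> a | Some j \<Rightarrow> c j)"
  define K where "K = insert None (Some ` {..<j})"
  have sdpos: "sdv k > 0" for k using al unfolding sdv_def by (cases k) auto
  have sdsq: "(sdv k)\<^sup>2 = (case k of None \<Rightarrow> 1/\<alpha> | Some _ \<Rightarrow> 1)" for k using al by (cases k) (auto simp: sdv_def)
  have DX: "distributed M lborel (X k) (normal_density 0 (sdv k))" for k
    using D0 Dx by (cases k) (auto simp: X_def sdv_def)
  have intX: "integrable M (X k)" for k
  proof -
    have "integrable lborel (\<lambda>x. normal_density 0 (sdv k) x * (x - 0) ^ 1)"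
      by (intro integrable_normal_moment sdpos)
    then have "integrable lborel (\<lambda>x. normal_density 0 (sdv k) x * (\<lambda>x. x) x)" by simp
    then show ?thesis using distributed_integrable[OF DX[of k], of "\<lambda>x. x"] by simp
  qed
  have intX2: "integrable M (\<lambda>\<omega>. X k \<omega> * X k \<omega>)" for k
  proof -
    have "integrable lborel (\<lambda>x. normal_density 0 (sdv k) x * (x - 0) ^ 2)"
      by (intro integrable_normal_moment sdpos)
    then have "integrable lborel (\<lambda>x. normal_density 0 (sdv k) x * (\<lambda>x. x * x) x)"
      by (simp add: power2_eq_square)
    then show ?thesis using distributed_integrable[OF DX[of k], of "\<lambda>x. x * x"] by simp
  qed
  have EX: "expectation (X k) = 0" for k
    using normal_distributed_expectation[OF sdpos DX] by simp
  have EX2: "expectation (\<lambda>\<omega>. X k \<omega> * X k \<omega>) = (sdv k)\<^sup>2" for k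
    using normal_distributed_variance[OF sdpos DX[of k]] EX[of k] by (simp add: power2_eq_square)
  have IX: "indep_vars (\<lambda>_. borel) X UNIV" using I by (simp add: X_def)
  have pair: "integrable M (\<lambda>\<omega>. X k \<omega> * X l \<omega>) \<and> expectation (\<lambda>\<omega>. X k \<omega> * X l \<omega>) = (if k = l then (sdv k)\<^sup>2 else 0)" for k l
  proof (cases "k = l")
    case True then show ?thesis using intX2 EX2 by simp
  next
    case False
    have ind: "indep_vars (\<lambda>_. borel) X {k, l}" by (rule indep_vars_subset[OF IX]) auto
    have "integrable M (\<lambda>\<omega>. \<Prod>i\<in>{k,l}. X i \<omega>)"
      by (rule indep_vars_integrable[OF _ ind]) (auto simp: intX)
    moreover have "expectation (\<lambda>\<omega>. \<Prod>i\<in>{k,l}. X i \<omega>) = (\<Prod>i\<in>{k,l}. expectation (X i))"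
      by (rule indep_vars_lebesgue_integral[OF _ ind]) (auto simp: intX)
    ultimately show ?thesis using False EX by simp
  qed
  define S where "S = (\<lambda>\<omega>. \<Sum>k\<in>K. w k * X k \<omega>)"
  have finK: "finite K" by (simp add: K_def)
  have SZ: "a * th0 \<omega> + b + (\<Sum>i<j. c i * xi i \<omega>) = b + S \<omega>" for \<omega>
  proof -
    have "S \<omega> = a * th0 \<omega> + (\<Sum>k\<in>Some ` {..<j}. w k * X k \<omega>)"
      by (simp add: S_def K_def sum.insert w_def X_def)
    also have "(\<Sum>k\<in>Some ` {..<j}. w k * X k \<omega>) = (\<Sum>i<j. c i * xi i \<omega>)"
      by (subst sum.reindex) (auto simp: w_def X_def)
    finally show ?thesis by simp
  qed
  have intS: "integrable M S" unfolding S_def using intX by auto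
  have ES: "expectation S = 0"
  proof -
    have "expectation S = (\<Sum>k\<in>K. expectation (\<lambda>\<omega>. w k * X k \<omega>))"
      unfolding S_def by (rule Bochner_Integration.integral_sum[where f="\<lambda>k \<omega>. w k * X k \<omega>"]) (auto intro: intX)
    also have "\<dots> = 0" using EX by simp
    finally show ?thesis .
  qed
  have EZ: "integral\<^sup>L M (\<lambda>\<omega>. a * th0 \<omega> + b + (\<Sum>i<j. c i * xi i \<omega>)) = b"
    unfolding SZ using intS ES by (simp add: prob_space)
  have sq: "(S \<omega>)\<^sup>2 = (\<Sum>k\<in>K. \<Sum>l\<in>K. w k * w l * (X k \<omega> * X l \<omega>))" for \<omega>
    unfolding S_def power2_eq_square sum_product by (simp add: ac_simps)
  have "integral\<^sup>L M (\<lambda>\<omega>. (S \<omega>)\<^sup>2) = (\<Sum>k\<in>K. \<Sum>l\<in>K. w k * w l * expectation (\<lambda>\<omega>. X k \<omega> * X l \<omega>))"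
  proof -
    have "integral\<^sup>L M (\<lambda>\<omega>. (S \<omega>)\<^sup>2) = (\<Sum>k\<in>K. integral\<^sup>L M (\<lambda>\<omega>. \<Sum>l\<in>K. w k * w l * (X k \<omega> * X l \<omega>)))"
      unfolding sq by (rule Bochner_Integration.integral_sum[where f="\<lambda>k \<omega>. \<Sum>l\<in>K. w k * w l * (X k \<omega> * X l \<omega>)"]) (use pair in auto)
    also have "\<dots> = (\<Sum>k\<in>K. \<Sum>l\<in>K. w k * w l * expectation (\<lambda>\<omega>. X k \<omega> * X l \<omega>))"
    proof (rule sum.cong[OF refl])
      fix k
      show "integral\<^sup>L M (\<lambda>\<omega>. \<Sum>l\<in>K. w k * w l * (X k \<omega> * X l \<omega>)) = (\<Sum>l\<in>K. w k * w l * expectation (\<lambda>\<omega>. X k \<omega> * X l \<omega>))"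
        by (subst Bochner_Integration.integral_sum[where f="\<lambda>l \<omega>. w k * w l * (X k \<omega> * X l \<omega>)"]) (use pair in auto)
    qed
    finally show ?thesis .
  qed
  also have "\<dots> = (\<Sum>k\<in>K. w k * w k * (sdv k)\<^sup>2)"
  proof (rule sum.cong[OF refl])
    fix k assume k: "k \<in> K"
    have Ep: "expectation (\<lambda>\<omega>. X k \<omega> * X l \<omega>) = (if k = l then (sdv k)\<^sup>2 else 0)" for l
      using pair[of k l] by simp
    have "(\<Sum>l\<in>K. w k * w l * expectation (\<lambda>\<omega>. X k \<omega> * X l \<omega>)) = (\<Sum>l\<in>K. if k = l then w k * w k * (sdv k)\<^sup>2 else 0)"
      by (rule sum.cong) (auto simp: Ep)
    also have "\<dots> = w k * w k * (sdv k)\<^sup>2" using k finK by simp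
    finally show "(\<Sum>l\<in>K. w k * w l * expectation (\<lambda>\<omega>. X k \<omega> * X l \<omega>)) = w k * w k * (sdv k)\<^sup>2" .
  qed
  also have "\<dots> = a\<^sup>2 / \<alpha> + (\<Sum>i<j. (c i)\<^sup>2)"
    using al by (simp add: K_def sum.insert sum.reindex w_def sdv_def power2_eq_square)
  finally have fin: "integral\<^sup>L M (\<lambda>\<omega>. (S \<omega>)\<^sup>2) = a\<^sup>2 / \<alpha> + (\<Sum>i<j. (c i)\<^sup>2)" .
  have EZ': "expectation (\<lambda>\<omega>. b + S \<omega>) = b" using intS ES by (simp add: prob_space)
  show ?thesis unfolding SZ EZ' using fin by simp
qed



lemma bonf:
  fixes x :: real assumes x0: "0 \<le> x" and x1: "x \<le> 1"
  shows "1 - real m * x + real m * (real m - 1) / 2 * x^2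
          - real m * (real m - 1) * (real m - 2) / 6 * x^3 \<le> (1 - x)^m"
proof (induction m)
  case 0 then show ?case by simp
next
  case (Suc m)
  have nn: "0 \<le> real m * (real m - 1) * (real m - 2)"
  proof (cases "m < 3")
    case True then have "m = 0 \<or> m = 1 \<or> m = 2" by auto
    then show ?thesis by auto
  next
    case False then have "real m \<ge> 3" by simp
    then show ?thesis by (simp add: mult_nonneg_nonneg)
  qed
  have "(1 - x) * (1 - real m * x + real m * (real m - 1) / 2 * x^2
          - real m * (real m - 1) * (real m - 2) / 6 * x^3) \<le> (1 - x) * (1 - x)^m"
    using Suc x1 by (intro mult_left_mono) auto
  moreover have "(1 - x) * (1 - real m * x + real m * (real m - 1) / 2 * x^2
          - real m * (real m - 1) * (real m - 2) / 6 * x^3)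
     = 1 - real (Suc m) * x + real (Suc m) * (real (Suc m) - 1) / 2 * x^2
          - real (Suc m) * (real (Suc m) - 1) * (real (Suc m) - 2) / 6 * x^3
       + real m * (real m - 1) * (real m - 2) / 6 * x^4"
    by (simp add: of_nat_Suc field_simps power2_eq_square power3_eq_cube power4_eq_xxxx)
  moreover have "0 \<le> real m * (real m - 1) * (real m - 2) / 6 * x^4"
    using nn x0 by simp
  ultimately show ?case by simp
qed

lemma poly_key:
  fixes N A al :: real
  assumes N: "N \<ge> 2" and al: "0 < al" "al \<le> A - 3 * N"
  shows "4 * N * al * A \<le> A^3 - 4 * N * A^2 + 2 * N * (4 * N - 1) * A
          - (2/3) * N * (4 * N - 1) * (4 * N - 2)"
proof -
  define s where "s = A - 3 * N"
  have s0: "s > 0" using al s_def by simp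
  have A: "A = 3 * N + s" using s_def by simp
  have q: "0 \<le> s^2 - (N + 2) * s + 13 * N^2 / 3"
  proof -
    have "(N+2)^2 \<le> (2*N)^2" using N by (intro power_mono) auto
    then have "(N+2)^2 / 4 \<le> N^2" by (simp add: power_mult_distrib)
    moreover have "0 \<le> (s - (N+2)/2)^2" by simp
    moreover have "s^2 - (N + 2) * s + 13 * N^2 / 3 = (s - (N+2)/2)^2 + 13 * N^2 / 3 - (N+2)^2/4"
      by (simp add: power2_eq_square field_simps)
    moreover have "0 \<le> N^2" by simp
    ultimately show ?thesis by linarith
  qed
  have h: "A^3 - 4 * N * A^2 + 2 * N * (4 * N - 1) * A - (2/3) * N * (4 * N - 1) * (4 * N - 2)
        - 4 * N * (A - 3 * N) * A
      = N * (s^2 - (N + 2) * s + 13 * N^2 / 3) + s^3 + 2 * N^2 - 4 * N / 3"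
    unfolding A by (simp add: field_simps power2_eq_square power3_eq_cube)
  have "0 \<le> N * (s^2 - (N + 2) * s + 13 * N^2 / 3)" using q N by simp
  moreover have "0 \<le> s^3" using s0 by simp
  moreover have "0 \<le> 2 * N^2 - 4 * N / 3"
  proof -
    have "2 * N \<le> N * N" using N by (intro mult_right_mono) auto
    then show ?thesis using N by (simp add: power2_eq_square)
  qed
  moreover have "4 * N * al * A \<le> 4 * N * (A - 3 * N) * A"
    using al N s0 A by (intro mult_right_mono mult_left_mono) auto
  ultimately show ?thesis using h by linarith
qed

lemma key_ineq:
  fixes al q :: real and n :: nat
  assumes n: "n \<ge> 2" and al: "al > 0" and q: "q > 3"
  shows "4 * real n * al \<le> (al + real n * q)^2 * (1 - 1 / (al + real n * q))^(4*n)"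
proof -
  define A where "A = al + real n * q"
  define N where "N = real n"
  have N2: "N \<ge> 2" using n by (simp add: N_def)
  have "0 \<le> N * (q - 3)" using q N2 by simp
  then have alA: "al \<le> A - 3 * N" by (simp add: A_def N_def algebra_simps)
  have Apos: "A > 1" using alA N2 al by simp
  have x0: "0 \<le> 1 / A" and x1: "1 / A \<le> 1" using Apos by auto
  have B: "1 - real (4*n) * (1/A) + real (4*n) * (real (4*n) - 1) / 2 * (1/A)^2
          - real (4*n) * (real (4*n) - 1) * (real (4*n) - 2) / 6 * (1/A)^3 \<le> (1 - 1/A)^(4*n)"
    by (rule bonf[OF x0 x1])
  have eq: "A^2 * (1 - real (4*n) * (1/A) + real (4*n) * (real (4*n) - 1) / 2 * (1/A)^2
          - real (4*n) * (real (4*n) - 1) * (real (4*n) - 2) / 6 * (1/A)^3)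
      = (A^3 - 4 * N * A^2 + 2 * N * (4 * N - 1) * A
          - (2/3) * N * (4 * N - 1) * (4 * N - 2)) / A"
    using Apos by (simp add: N_def field_simps power2_eq_square power3_eq_cube)
  have "4 * N * al \<le> (A^3 - 4 * N * A^2 + 2 * N * (4 * N - 1) * A
          - (2/3) * N * (4 * N - 1) * (4 * N - 2)) / A"
    using poly_key[OF N2 al alA] Apos by (simp add: field_simps)
  also have "\<dots> \<le> A^2 * (1 - 1/A)^(4*n)"
    unfolding eq[symmetric] by (rule mult_left_mono[OF B]) simp
  finally show ?thesis by (simp add: A_def N_def)
qed



fun lin_a :: "(nat \<Rightarrow> real) \<Rightarrow> nat \<Rightarrow> real" where
  "lin_a m 0 = 1"
| "lin_a m (Suc j) = m j * lin_a m j"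

fun lin_b :: "(nat \<Rightarrow> real) \<Rightarrow> (nat \<Rightarrow> real) \<Rightarrow> nat \<Rightarrow> real" where
  "lin_b m d 0 = 0"
| "lin_b m d (Suc j) = m j * lin_b m d j + d j"

fun lin_c :: "(nat \<Rightarrow> real) \<Rightarrow> real \<Rightarrow> nat \<Rightarrow> nat \<Rightarrow> real" where
  "lin_c m s 0 i = 0"
| "lin_c m s (Suc j) i = (if i = j then s else m j * lin_c m s j i)"

lemma lin_rep:
  assumes T0: "T 0 = th0" and TS: "\<And>j \<omega>. T (Suc j) \<omega> = m j * T j \<omega> + d j + s * xi j \<omega>"
  shows "T j \<omega> = lin_a m j * th0 \<omega> + lin_b m d j + (\<Sum>i<j. lin_c m s j i * xi i \<omega>)"
proof (induction j)
  case 0 then show ?case using T0 by simp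
next
  case (Suc j)
  have "(\<Sum>i<Suc j. lin_c m s (Suc j) i * xi i \<omega>) = s * xi j \<omega> + m j * (\<Sum>i<j. lin_c m s j i * xi i \<omega>)"
    by (simp add: sum_distrib_left ac_simps)
  then show ?case using TS Suc by (simp add: algebra_simps)
qed

lemma lin_a_prod: "lin_a m j = (\<Prod>i<j. m i)"
  by (induction j) (auto simp: ac_simps)

lemma lin_c_bound:
  assumes "\<And>i. \<bar>m i\<bar> \<le> 1" "0 \<le> s"
  shows "\<bar>lin_c m s j i\<bar> \<le> s"
proof (induction j)
  case 0 then show ?case using assms by simp
next
  case (Suc j)
  have "\<bar>m j * lin_c m s j i\<bar> \<le> 1 * s"
    unfolding abs_mult using assms Suc by (intro mult_mono) auto
  then show ?case using assms by simp
qed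

lemma lin_c_sq_sum:
  assumes "\<And>i. \<bar>m i\<bar> \<le> 1" "0 \<le> s"
  shows "(\<Sum>i<j. (lin_c m s j i)\<^sup>2) \<le> real j * s\<^sup>2"
proof -
  have "(\<Sum>i<j. (lin_c m s j i)\<^sup>2) \<le> (\<Sum>i<j. s\<^sup>2)"
  proof (rule sum_mono)
    fix i
    have "\<bar>lin_c m s j i\<bar>\<^sup>2 \<le> s\<^sup>2" using lin_c_bound[OF assms] by (intro power_mono) auto
    then show "(lin_c m s j i)\<^sup>2 \<le> s\<^sup>2" by simp
  qed
  then show ?thesis by simp
qed

lemma prod_twice:
  fixes g :: "nat \<Rightarrow> real"
  shows "(\<Prod>i<2*n. g (i mod n)) = (\<Prod>i<n. g i)^2"
proof -
  have "(\<Prod>i<2*n. g (i mod n)) = (\<Prod>i\<in>{0..<n}. g (i mod n)) * (\<Prod>i\<in>{n..<n+n}. g (i mod n))"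
    using prod.atLeastLessThan_concat[of 0 n "n+n" "\<lambda>i. g (i mod n)"] by (simp add: lessThan_atLeast0 mult_2)
  also have "(\<Prod>i\<in>{n..<n+n}. g (i mod n)) = (\<Prod>i\<in>{0..<n}. g ((i + n) mod n))"
    using prod.shift_bounds_nat_ivl[of "\<lambda>i. g (i mod n)" 0 n n] by simp
  also have "\<dots> = (\<Prod>i\<in>{0..<n}. g i)" by (rule prod.cong) auto
  also have "(\<Prod>i\<in>{0..<n}. g (i mod n)) = (\<Prod>i\<in>{0..<n}. g i)" by (rule prod.cong) auto
  finally show ?thesis by (simp add: power2_eq_square lessThan_atLeast0)
qed

lemma prod_one_diff:
  fixes lh l :: real
  assumes "p < n"
  shows "(\<Prod>i<n. if i = p then lh else l) = lh * l^(n - 1)"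
proof -
  have "(\<Prod>i<n. if i = p then lh else l) = (if p = p then lh else l) * (\<Prod>i\<in>{..<n} - {p}. if i = p then lh else l)"
    using assms by (subst prod.remove[of _ p]) auto
  also have "(\<Prod>i\<in>{..<n} - {p}. if i = p then lh else l) = (\<Prod>i\<in>{..<n} - {p}. l)"
    by (rule prod.cong) auto
  also have "\<dots> = l^(n-1)" using assms by simp
  finally show ?thesis by simp
qed



theorem lemmaA3:
  fixes \<alpha> \<beta> xh c :: real and n :: nat
    and M :: "'a measure" and th0 :: "'a \<Rightarrow> real" and xi :: "nat \<Rightarrow> 'a \<Rightarrow> real"
  assumes "\<alpha> > 0" "\<beta> > 0" "xh > 0" "c > 0" "n \<ge> 2"
    and "xh\<^sup>2 * \<beta> > 3"
    and "real n > 1 / (2 * \<alpha> * xh\<^sup>2 * \<beta>) - 1 / (xh\<^sup>2 * \<beta>)"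
    and "prob_space M"
    and "distributed M lborel th0 (normal_density 0 (sqrt (1 / \<alpha>)))"
    and "\<And>j. distributed M lborel (xi j) (normal_density 0 1)"
    and "prob_space.indep_vars M (\<lambda>_. borel)
           (\<lambda>i. case i of None \<Rightarrow> th0 | Some j \<Rightarrow> xi j) UNIV"
  shows "\<exists>kd::nat. kd > 0 \<and> (\<forall>k::nat. 0 < k \<and> k \<le> kd \<longrightarrow>
     (let lam = sgld_lambda \<alpha> \<beta> xh n; lamh = sgld_lambda_hat \<alpha> \<beta> xh n;
          var = (\<lambda>X. integral\<^sup>L M (\<lambda>\<omega>. (X \<omega> - integral\<^sup>L M X)\<^sup>2))
      in var (sgld_iter \<alpha> \<beta> xh c n 1 th0 xi ((k + 1) * n))
           \<le> 2 * (lamh * lam ^ (n - 1))\<^sup>2 * (1 / \<alpha>) * (lamh * lam ^ (n - 1)) ^ (2 * k)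
       \<and> (\<forall>r \<in> {2..n}. var (sgld_iter \<alpha> \<beta> xh c n r th0 xi ((k + 1) * n))
           \<le> 6 * (lamh * lam ^ (n - r))\<^sup>2 * (1 / \<alpha>) * (lamh * lam ^ (n - 1)) ^ (2 * k))))"
proof -
  note al = assms(1) and be = assms(2) and xh = assms(3) and n2 = assms(5) and q3 = assms(6)
  define \<eta> where "\<eta> = sgld_eta \<alpha> \<beta> xh n"
  define lam where "lam = sgld_lambda \<alpha> \<beta> xh n"
  define lamh where "lamh = sgld_lambda_hat \<alpha> \<beta> xh n"
  define q where "q = xh\<^sup>2 * \<beta>"
  define A where "A = \<alpha> + real n * q"
  define var where "var = (\<lambda>X::'a \<Rightarrow> real. integral\<^sup>L M (\<lambda>\<omega>. (X \<omega> - integral\<^sup>L M X)\<^sup>2))"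
  define P where "P = lamh * lam ^ (n - 1)"
  have q3': "q > 3" using q3 by (simp add: q_def)
  have "real n * 3 < real n * q" using q3' n2 by (intro mult_strict_left_mono) auto
  then have A3: "A > 3 * real n" using al by (simp add: A_def)
  have A1: "A > 1" using A3 n2 by simp
  have eta: "\<eta> = 2 / A\<^sup>2" by (simp add: \<eta>_def sgld_eta_def A_def q_def mult.assoc)
  have etapos: "\<eta> \<ge> 0" using eta by simp
  have "lam = 1 - \<eta> / 2 * A" by (simp add: lam_def sgld_lambda_def \<eta>_def A_def q_def mult.assoc)
  then have lamA: "lam = 1 - 1 / A" using A1 by (simp add: eta power2_eq_square)
  have "lamh = 1 - \<eta> / 2 * (\<alpha> + real n * q / 4)"
    by (simp add: lamh_def sgld_lambda_hat_def \<eta>_def q_def algebra_simps)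
  then have lamhA: "lamh = 1 - (\<alpha> + real n * q / 4) / A\<^sup>2" by (simp add: eta)
  have lam0: "0 \<le> lam" and lam1: "lam \<le> 1" using A1 lamA by auto
  have lamlamh: "lam \<le> lamh"
  proof -
    have "(\<alpha> + real n * q / 4) / A\<^sup>2 \<le> A / A\<^sup>2"
      using A1 al q3' by (intro divide_right_mono) (auto simp: A_def)
    also have "A / A\<^sup>2 = 1 / A" using A1 by (simp add: power2_eq_square)
    finally show ?thesis using lamA lamhA by simp
  qed
  have lamh1: "lamh \<le> 1" using lamhA al q3' A1 by simp
  have lamh0: "0 \<le> lamh" using lam0 lamlamh by simp
  define m where "m = (\<lambda>r j. if j mod n = r - 1 then lamh else lam)"
  define d where "d = (\<lambda>r j. \<eta> / 2 * (real n * \<beta> * sgld_y xh c n r j * sgld_x xh n r j))"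
  have step: "sgld_iter \<alpha> \<beta> xh c n r th0 xi (Suc j) \<omega> =
      m r j * sgld_iter \<alpha> \<beta> xh c n r th0 xi j \<omega> + d r j + sqrt \<eta> * xi j \<omega>" for r j \<omega>
  proof (cases "j mod n = r - 1")
    case True then show ?thesis
      by (simp add: m_def d_def sgld_x_def sgld_y_def lamh_def sgld_lambda_hat_def \<eta>_def algebra_simps power2_eq_square)
  next
    case False then show ?thesis
      by (simp add: m_def d_def sgld_x_def sgld_y_def lam_def sgld_lambda_def \<eta>_def algebra_simps power2_eq_square)
  qed
  have rep: "sgld_iter \<alpha> \<beta> xh c n r th0 xi j = (\<lambda>\<omega>. lin_a (m r) j * th0 \<omega> + lin_b (m r) (d r) j
      + (\<Sum>i<j. lin_c (m r) (sqrt \<eta>) j i * xi i \<omega>))" for r j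
    by (rule ext, rule lin_rep[where T="sgld_iter \<alpha> \<beta> xh c n r th0 xi"]) (simp_all only: sgld_iter.simps(1) step)
  have mabs: "\<bar>m r i\<bar> \<le> 1" for r i using lam0 lam1 lamh0 lamh1 by (simp add: m_def)
  have key: "2 * real n * \<eta> \<le> P^4 / \<alpha>"
  proof -
    have k1: "4 * real n * \<alpha> \<le> A^2 * lam^(4*n)"
      using key_ineq[OF n2 al q3'] by (simp add: A_def lamA)
    have "lam^(4*n) = (lam * lam^(n-1))^4" using n2
      by (metis power_Suc power_mult mult.commute Suc_diff_1 less_le_trans zero_less_numeral pos2)
    also have "\<dots> \<le> P^4" unfolding P_def
      using lam0 lamlamh by (intro power_mono mult_right_mono) auto
    finally have "A^2 * lam^(4*n) \<le> A^2 * P^4" by (rule mult_left_mono) simp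
    then have "4 * real n * \<alpha> \<le> A^2 * P^4" using k1 by linarith
    then show ?thesis using al A1 by (simp add: eta field_simps)
  qed
  have vb: "var (sgld_iter \<alpha> \<beta> xh c n r th0 xi (2 * n)) \<le> 2 * P^4 / \<alpha>" if r: "1 \<le> r" "r \<le> n" for r
  proof -
    have V: "var (sgld_iter \<alpha> \<beta> xh c n r th0 xi (2 * n)) =
        (lin_a (m r) (2*n))\<^sup>2 / \<alpha> + (\<Sum>i<2*n. (lin_c (m r) (sqrt \<eta>) (2*n) i)\<^sup>2)"
      unfolding rep var_def by (rule var_lin[OF assms(8) al assms(9) assms(10) assms(11)])
    have LA: "lin_a (m r) (2*n) = P\<^sup>2"
    proof -
      have "lin_a (m r) (2*n) = (\<Prod>i<2*n. (\<lambda>i. if i = r - 1 then lamh else lam) (i mod n))"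
        by (simp add: lin_a_prod m_def)
      also have "\<dots> = (\<Prod>i<n. if i = r - 1 then lamh else lam)^2" by (rule prod_twice)
      also have "\<dots> = P\<^sup>2" using r by (subst prod_one_diff) (auto simp: P_def)
      finally show ?thesis .
    qed
    have LC: "(\<Sum>i<2*n. (lin_c (m r) (sqrt \<eta>) (2*n) i)\<^sup>2) \<le> real (2*n) * (sqrt \<eta>)\<^sup>2"
      by (rule lin_c_sq_sum) (auto simp: mabs etapos)
    have e2: "real (2*n) * (sqrt \<eta>)\<^sup>2 = 2 * real n * \<eta>" using etapos by simp
    have p4: "(P\<^sup>2)\<^sup>2 = P^4" by (simp add: power_mult[symmetric])
    have "var (sgld_iter \<alpha> \<beta> xh c n r th0 xi (2 * n)) \<le> P^4 / \<alpha> + 2 * real n * \<eta>"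
      using V[unfolded LA p4] LC e2 by linarith
    then show ?thesis using key by simp
  qed
  have Pge: "P\<^sup>2 \<le> (lamh * lam ^ (n - r))\<^sup>2" if "r \<ge> 1" for r
  proof -
    have "lam ^ (n - 1) \<le> lam ^ (n - r)" using lam0 lam1 that by (intro power_decreasing) auto
    then show ?thesis unfolding P_def using lamh0 lam0 by (intro power_mono mult_left_mono) auto
  qed
  have P0: "0 \<le> P^4 / \<alpha>" using al by simp
  show ?thesis
  proof (rule exI[of _ 1], intro conjI allI impI)
    fix k :: nat assume "0 < k \<and> k \<le> 1"
    then have k: "k = 1" by simp
    have r1: "var (sgld_iter \<alpha> \<beta> xh c n 1 th0 xi ((k + 1) * n)) \<le> 2 * P\<^sup>2 * (1 / \<alpha>) * P ^ (2 * k)"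
    proof -
      have eq: "2 * P\<^sup>2 * (1 / \<alpha>) * P ^ (2 * k) = 2 * P^4 / \<alpha>"
        unfolding k by (simp add: power2_eq_square power4_eq_xxxx)
      have e: "(k + 1) * n = 2 * n" using k by simp
      have v1: "var (sgld_iter \<alpha> \<beta> xh c n 1 th0 xi (2 * n)) \<le> 2 * P^4 / \<alpha>" using vb[of 1] n2 by simp
      show ?thesis unfolding e eq by (rule v1)
    qed
    have r2: "var (sgld_iter \<alpha> \<beta> xh c n r th0 xi ((k + 1) * n))
           \<le> 6 * (lamh * lam ^ (n - r))\<^sup>2 * (1 / \<alpha>) * P ^ (2 * k)" if r: "r \<in> {2..n}" for r
    proof -
      have "var (sgld_iter \<alpha> \<beta> xh c n r th0 xi ((k + 1) * n)) \<le> 2 * P^4 / \<alpha>"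
      proof -
        have e: "(k + 1) * n = 2 * n" using k by simp
        have v1: "var (sgld_iter \<alpha> \<beta> xh c n r th0 xi (2 * n)) \<le> 2 * P^4 / \<alpha>" using vb[of r] r by simp
        show ?thesis unfolding e by (rule v1)
      qed
      also have "\<dots> \<le> 6 * P\<^sup>2 * (1 / \<alpha>) * P\<^sup>2"
      proof -
        have eq': "6 * P\<^sup>2 * (1 / \<alpha>) * P\<^sup>2 = 6 * P^4 / \<alpha>" by (simp add: power2_eq_square power4_eq_xxxx)
        have "0 \<le> P" unfolding P_def using lamh0 lam0 by simp
        then have "2 * P^4 \<le> 6 * P^4" by simp
        then have "2 * P^4 / \<alpha> \<le> 6 * P^4 / \<alpha>" using al by (intro divide_right_mono) auto
        then show ?thesis unfolding eq' .
      qed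
      also have "\<dots> \<le> 6 * (lamh * lam ^ (n - r))\<^sup>2 * (1 / \<alpha>) * P\<^sup>2"
        using Pge[of r] r al by (intro mult_right_mono mult_left_mono) auto
      finally show ?thesis by (simp add: k)
    qed
    show "let lam = sgld_lambda \<alpha> \<beta> xh n; lamh = sgld_lambda_hat \<alpha> \<beta> xh n;
          var = (\<lambda>X. integral\<^sup>L M (\<lambda>\<omega>. (X \<omega> - integral\<^sup>L M X)\<^sup>2))
      in var (sgld_iter \<alpha> \<beta> xh c n 1 th0 xi ((k + 1) * n))
           \<le> 2 * (lamh * lam ^ (n - 1))\<^sup>2 * (1 / \<alpha>) * (lamh * lam ^ (n - 1)) ^ (2 * k)
       \<and> (\<forall>r \<in> {2..n}. var (sgld_iter \<alpha> \<beta> xh c n r th0 xi ((k + 1) * n))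
           \<le> 6 * (lamh * lam ^ (n - r))\<^sup>2 * (1 / \<alpha>) * (lamh * lam ^ (n - 1)) ^ (2 * k))"
      using r1 r2 unfolding Let_def var_def lam_def lamh_def P_def by simp
  qed simp
qed

end
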